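(* Let $\underline{c}=\{c_n,n\ge1\}$ be positive reals with $c_n\to c\ge1$. Let $\{\varphi_n,n\ge1\}$ be a sequence of real numbers which is $\underline{c}$-subadditive, i.e. $$\varphi_{n_1+\dots+n_k}\le c_{n_1+\dots+n_k}(\varphi_{n_1}+\dots+\varphi_{n_k})$$ for all positive integers $n_1,\dots,n_k$ and all $k\ge1$. Then $$\inf_{n\ge1}\frac{\varphi_n}{n}\le\liminf_{n\to\infty}\frac{\varphi_n}{n}\le\limsup_{n\to\infty}\frac{\varphi_n}{n}\le c^2\inf_{n\ge1}\frac{\varphi_n}{n}.$$ *)

theory Defs
  imports "HOL-Analysis.Analysis"
begin

end

theory Submission
  imports Defs
begin

lemma ereal_cmult_INF:
  assumes "k > (0::real)"
  shows "ereal k * (INF x\<in>A. f x) = (INF x\<in>A. ereal k * f x)"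
proof -
  have "bij ((*) (ereal k))"
    apply (rule bij_betw_byWitness[of _ "\<lambda>x. (x::ereal) / k"], auto simp: assms ereal_mult_divide)
    using assms ereal_divide_eq by auto
  then have "ereal k * Inf (f ` A) = Inf ((*) (ereal k) ` (f ` A))"
    by (simp add: assms ereal_mult_left_mono less_imp_le mono_def mono_bij_Inf)
  then show ?thesis by (simp add: image_image)
qed

theorem mainTheorem7:
  fixes c :: "nat \<Rightarrow> real" and c0 :: real and \<phi> :: "nat \<Rightarrow> real"
  assumes c_pos: "\<And>n. n \<ge> 1 \<Longrightarrow> c n > 0"
    and c_lim: "c \<longlonglongrightarrow> c0"
    and c0_ge: "c0 \<ge> 1"
    and subadd: "\<And>ns. ns \<noteq> [] \<Longrightarrow> (\<forall>n\<in>set ns. n \<ge> 1) \<Longrightarrow>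
                   \<phi> (sum_list ns) \<le> c (sum_list ns) * sum_list (map \<phi> ns)"
  shows "(INF n\<in>{1..}. ereal (\<phi> n / real n)) \<le> liminf (\<lambda>n. ereal (\<phi> n / real n)) \<and>
         liminf (\<lambda>n. ereal (\<phi> n / real n)) \<le> limsup (\<lambda>n. ereal (\<phi> n / real n)) \<and>
         limsup (\<lambda>n. ereal (\<phi> n / real n)) \<le> ereal (c0\<^sup>2) * (INF n\<in>{1..}. ereal (\<phi> n / real n))"
proof (intro conjI)
  let ?f = "\<lambda>n. ereal (\<phi> n / real n)"
  show "(INF n\<in>{1..}. ?f n) \<le> liminf ?f"
    unfolding liminf_SUP_INF by (rule SUP_upper2[of 1]) auto
  show "liminf ?f \<le> limsup ?f" by (rule Liminf_le_Limsup) simp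
  have key: "limsup ?f \<le> ereal (c0 * (\<phi> m / real m))" if m: "m \<ge> 1" for m
  proof -
    define B where "B n = (if n mod m = 0 then 0 else \<phi> (n mod m))" for n
    define g where "g n = c n * (real (n div m) * \<phi> m + B n) / real n" for n
    have ev: "\<phi> n / real n \<le> g n" if n: "n \<ge> 1" for n
    proof -
      define ns where "ns = replicate (n div m) m @ (if n mod m = 0 then [] else [n mod m])"
      have s: "sum_list ns = n"
        unfolding ns_def using div_mult_mod_eq[of n m] by (cases "n mod m = 0") (simp_all add: sum_list_replicate)
      have ne: "ns \<noteq> []"
      proof
        assume "ns = []" then have "sum_list ns = 0" by simp
        with s n show False by simp
      qed
      have ge: "\<forall>x\<in>set ns. x \<ge> 1" unfolding ns_def using m by auto
      have sm: "sum_list (map \<phi> ns) = real (n div m) * \<phi> m + B n"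
        unfolding ns_def B_def by (simp add: sum_list_replicate)
      have "\<phi> n \<le> c n * (real (n div m) * \<phi> m + B n)"
        using subadd[OF ne ge] s sm by simp
      then show ?thesis unfolding g_def using n by (simp add: divide_right_mono)
    qed
    have lim1: "(\<lambda>n. real (n div m) / real n) \<longlonglongrightarrow> 1 / real m"
    proof -
      have eq: "real (n div m) / real n = 1 / real m - real (n mod m) / real m * (1 / real n)"
        if "n \<ge> 1" for n
      proof -
        have "real n = real (n div m) * real m + real (n mod m)"
          by (metis div_mult_mod_eq of_nat_add of_nat_mult)
        then have h: "real (n div m) = (real n - real (n mod m)) / real m"
          using m by (simp add: field_simps)
        have "real n > 0" using that by simp
        then show ?thesis unfolding h using m by (simp add: field_simps)
      qed
      have bd: "(\<lambda>n. real (n mod m) / real m * (1 / real n)) \<longlonglongrightarrow> 0"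
      proof (rule Lim_null_comparison[where g = "\<lambda>n. 1 / real n"])
        show "\<forall>\<^sub>F n in sequentially. norm (real (n mod m) / real m * (1 / real n)) \<le> 1 / real n"
        proof (intro always_eventually allI)
          fix n
          have "real (n mod m) \<le> real m" using m by simp
          then have "real (n mod m) / real m \<le> 1" using m by (simp add: divide_le_eq)
          then have "real (n mod m) / real m * (1 / real n) \<le> 1 * (1 / real n)"
            by (intro mult_right_mono) auto
          then show "norm (real (n mod m) / real m * (1 / real n)) \<le> 1 / real n" by simp
        qed
        show "(\<lambda>n. 1 / real n) \<longlonglongrightarrow> 0" by (rule lim_const_over_n)
      qed
      have l: "(\<lambda>n. 1 / real m - real (n mod m) / real m * (1 / real n)) \<longlonglongrightarrow> 1 / real m"
        using tendsto_diff[OF tendsto_const bd, of "1 / real m"] by simp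
      have e: "\<forall>\<^sub>F n in sequentially. 1 / real m - real (n mod m) / real m * (1 / real n) = real (n div m) / real n"
        unfolding eventually_sequentially using eq by (intro exI[of _ 1]) auto
      show ?thesis by (rule Lim_transform_eventually[OF l e])
    qed
    define M where "M = (\<Sum>r<m. \<bar>\<phi> r\<bar>)"
    have Bb: "\<bar>B n\<bar> \<le> M" for n
    proof -
      have "n mod m < m" using m by simp
      then have "\<bar>\<phi> (n mod m)\<bar> \<le> M" unfolding M_def
        by (intro member_le_sum) auto
      moreover have "M \<ge> 0" unfolding M_def by (intro sum_nonneg) auto
      ultimately show ?thesis unfolding B_def by auto
    qed
    have lim2: "(\<lambda>n. B n / real n) \<longlonglongrightarrow> 0"
    proof (rule Lim_null_comparison[where g = "\<lambda>n. M * (1 / real n)"])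
      show "\<forall>\<^sub>F n in sequentially. norm (B n / real n) \<le> M * (1 / real n)"
        using Bb by (intro always_eventually allI) (auto simp: abs_divide divide_right_mono)
      show "(\<lambda>n. M * (1 / real n)) \<longlonglongrightarrow> 0"
        using tendsto_mult[OF tendsto_const lim_const_over_n, of M 1] by simp
    qed
    have "(\<lambda>n. c n * (\<phi> m * (real (n div m) / real n) + B n / real n)) \<longlonglongrightarrow> c0 * (\<phi> m * (1 / real m) + 0)"
      by (intro tendsto_intros c_lim lim1 lim2)
    then have glim: "g \<longlonglongrightarrow> c0 * (\<phi> m / real m)"
      unfolding g_def by (simp add: field_simps add_divide_distrib)
    have "limsup ?f \<le> limsup (\<lambda>n. ereal (g n))"
      by (rule Limsup_mono) (use ev in \<open>auto simp: eventually_sequentially\<close>)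
    also have "\<dots> = ereal (c0 * (\<phi> m / real m))"
      by (rule lim_imp_Limsup[OF _ tendsto_ereal[OF glim]]) simp
    finally show ?thesis .
  qed
  have key2: "limsup ?f \<le> ereal (c0\<^sup>2) * ?f m" if m: "m \<ge> 1" for m
  proof (cases "\<phi> m \<ge> 0")
    case True
    have "c0 * (\<phi> m / real m) \<le> c0\<^sup>2 * (\<phi> m / real m)"
      using True c0_ge by (intro mult_right_mono) (auto simp: power2_eq_square)
    then show ?thesis using key[OF m] by (simp add: order_trans)
  next
    case False
    have le1: "c (k * m) \<le> 1" if k: "k \<ge> 1" for k
    proof -
      have km: "k * m \<ge> 1" using k m by simp
      have "\<phi> (sum_list (replicate k m)) \<le> c (sum_list (replicate k m)) * sum_list (map \<phi> (replicate k m))"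
        by (rule subadd) (use k m in auto)
      then have a: "\<phi> (k*m) \<le> c (k*m) * (real k * \<phi> m)" by (simp add: sum_list_replicate)
      have "real k * \<phi> m < 0" using False k by (simp add: mult_pos_neg)
      then have neg: "\<phi> (k*m) < 0" using le_less_trans[OF a mult_pos_neg[OF c_pos[OF km]]] by blast
      have "\<phi> (sum_list [k*m]) \<le> c (sum_list [k*m]) * sum_list (map \<phi> [k*m])"
        by (rule subadd) (use km in auto)
      then have "\<phi> (k*m) \<le> c (k*m) * \<phi> (k*m)" by simp
      then have "1 * \<phi> (k*m) \<le> c (k*m) * \<phi> (k*m)" by simp
      then show ?thesis using neg by (simp add: mult_le_cancel_right)
    qed
    have sm: "strict_mono (\<lambda>k. (Suc k) * m)" using m by (auto simp: strict_mono_Suc_iff)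
    have lim: "(\<lambda>k. c (Suc k * m)) \<longlonglongrightarrow> c0"
      using LIMSEQ_subseq_LIMSEQ[OF c_lim sm] by (simp add: o_def)
    have le1': "c (Suc k * m) \<le> 1" for k by (rule le1) simp
    have "c0 \<le> 1"
      by (rule LIMSEQ_le_const2[OF lim]) (use le1' in blast)
    then have "c0 = 1" using c0_ge by simp
    then show ?thesis using key[OF m] by simp
  qed
  have c0p: "c0\<^sup>2 > 0" using c0_ge by simp
  show "limsup ?f \<le> ereal (c0\<^sup>2) * (INF n\<in>{1..}. ?f n)"
    unfolding ereal_cmult_INF[OF c0p] by (rule INF_greatest) (use key2 in auto)
qed

end
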